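(* Let $G$ be a finite subgroup of $\mathrm{PGL}_2(\mathbb{Q})$. Then $\mathcal{O}$ is infinite if and only if there exist $a,b\in\mathbb{Q}$ with $a^2\neq b^2$ such that $G$ is a subgroup of $$\left\{I,\ \begin{pmatrix}0&1\\1&0\end{pmatrix},\ \begin{pmatrix}a&b\\-b&-a\end{pmatrix},\ \begin{pmatrix}b&a\\-a&-b\end{pmatrix}\right\}\subset\mathrm{PGL}_2(\mathbb{Q}).$$
   Context: Elements $\sigma=\begin{pmatrix}a&b\\c&d\end{pmatrix}\in\mathrm{PGL}_2(\mathbb{Q})$ (matrices up to nonzero scalars) act on $\hat{\mathbb{C}}=\mathbb{C}\cup\{\infty\}$ as Möbius transformations $\sigma(z)=\frac{az+b}{cz+d}$. $\mathcal{O}$ is the set of those orbits $O$ of $G$ acting on $\hat{\mathbb{C}}$ such that every $z\in O$ satisfies $z=0$ or $|z|=1$. *)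

theory Defs
  imports Complex_Main
begin

text \<open>A rational 2x2 matrix (a b; c d) is encoded as the tuple (a, b, c, d).
  A subgroup of PGL_2(Q) is encoded by its full preimage in GL_2(Q): a set of
  nonsingular matrices containing all nonzero scalar matrices and closed under
  products and inverses.\<close>

type_synonym mat2 = "rat \<times> rat \<times> rat \<times> rat"

fun det2 :: "mat2 \<Rightarrow> rat" where
  "det2 (a, b, c, d) = a * d - b * c"

fun mmul2 :: "mat2 \<Rightarrow> mat2 \<Rightarrow> mat2" where
  "mmul2 (a, b, c, d) (a', b', c', d') =
     (a * a' + b * c', a * b' + b * d', c * a' + d * c', c * b' + d * d')"

fun minv2 :: "mat2 \<Rightarrow> mat2" where
  "minv2 (a, b, c, d) = (let e = a * d - b * c in (d / e, - b / e, - c / e, a / e))"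

fun smul2 :: "rat \<Rightarrow> mat2 \<Rightarrow> mat2" where
  "smul2 t (a, b, c, d) = (t * a, t * b, t * c, t * d)"

definition scalar2 :: "rat \<Rightarrow> mat2" where
  "scalar2 t = (t, 0, 0, t)"

definition proj_eq :: "mat2 \<Rightarrow> mat2 \<Rightarrow> bool" where
  "proj_eq M N \<longleftrightarrow> (\<exists>t. t \<noteq> 0 \<and> M = smul2 t N)"

definition proj_rel :: "(mat2 \<times> mat2) set" where
  "proj_rel = {(M, N). proj_eq M N}"

definition pgl2_subgroup :: "mat2 set \<Rightarrow> bool" where
  "pgl2_subgroup S \<longleftrightarrow>
     (\<forall>M\<in>S. det2 M \<noteq> 0) \<and>
     (\<forall>t. t \<noteq> 0 \<longrightarrow> scalar2 t \<in> S) \<and>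
     (\<forall>M\<in>S. \<forall>N\<in>S. mmul2 M N \<in> S) \<and>
     (\<forall>M\<in>S. minv2 M \<in> S)"

definition finite_pgl2_subgroup :: "mat2 set \<Rightarrow> bool" where
  "finite_pgl2_subgroup S \<longleftrightarrow> pgl2_subgroup S \<and> finite (S // proj_rel)"

text \<open>The Riemann sphere: None is the point at infinity.\<close>
type_synonym sphere = "complex option"

fun moebius :: "mat2 \<Rightarrow> sphere \<Rightarrow> sphere" where
  "moebius (a, b, c, d) None =
     (if c = 0 then None else Some (of_rat a / of_rat c))"
| "moebius (a, b, c, d) (Some z) =
     (if of_rat c * z + of_rat d = 0 then None
      else Some ((of_rat a * z + of_rat b) / (of_rat c * z + of_rat d)))"

definition orbit :: "mat2 set \<Rightarrow> sphere \<Rightarrow> sphere set" where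
  "orbit S z = (\<lambda>M. moebius M z) ` S"

text \<open>The set \<O> of orbits all of whose points are 0 or lie on the unit circle.\<close>
definition unit_orbits :: "mat2 set \<Rightarrow> sphere set set" where
  "unit_orbits S = {orbit S z | z. \<forall>w\<in>orbit S z.
      w = Some 0 \<or> (\<exists>u. w = Some u \<and> cmod u = 1)}"

end

theory Submission
  imports Defs
begin

lemma ofrat_c: "(of_rat q :: complex) = of_real (of_rat q)"
  by (induct q) (simp add: of_rat_rat)

lemma moebius_smul: "t \<noteq> 0 \<Longrightarrow> moebius (smul2 t N) z = moebius N z"
proof -
  assume t: "t \<noteq> 0"
  obtain a b c d where N: "N = (a,b,c,d)" by (cases N) auto
  have t': "(of_rat t :: complex) \<noteq> 0" using t by simp
  show ?thesis
  proof (cases z)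
    case None thus ?thesis using t t' by (simp add: N of_rat_mult)
  next
    case (Some w)
    have e: "of_rat (t*c) * w + of_rat (t*d) = of_rat t * (of_rat c * w + of_rat d)"
      "of_rat (t*a) * w + of_rat (t*b) = of_rat t * (of_rat a * w + of_rat b)"
      by (simp_all add: of_rat_mult algebra_simps)
    show ?thesis using t' by (simp add: N Some e)
  qed
qed

lemma proj_moebius: "proj_eq M N \<Longrightarrow> moebius M z = moebius N z"
proof -
  assume "proj_eq M N"
  then obtain t where "t \<noteq> 0" "M = smul2 t N" unfolding proj_eq_def by blast
  thus ?thesis using moebius_smul[of t N z] by simp
qed

lemma id_in: "pgl2_subgroup S \<Longrightarrow> (1,0,0,1) \<in> S"
  unfolding pgl2_subgroup_def scalar2_def by force

lemma moebius_id: "moebius (1,0,0,1) z = z"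
  by (cases z) auto

lemma in_orbit: "pgl2_subgroup S \<Longrightarrow> z \<in> orbit S z"
  unfolding orbit_def using id_in moebius_id by (metis image_eqI)

lemma cmod_swap:
  fixes a b :: real assumes "cmod w = 1"
  shows "cmod (of_real a * w + of_real b) = cmod (of_real b * w + of_real a)"
proof -
  have h: "(Re w)^2 + (Im w)^2 = 1" using assms cmod_power2 by (metis power_one)
  have "(cmod (of_real a * w + of_real b))^2 = (a * Re w + b)^2 + (a * Im w)^2"
    unfolding cmod_power2 by simp
  also have "\<dots> = a^2 * ((Re w)^2 + (Im w)^2) + 2*a*b*Re w + b^2"
    by (simp add: power2_eq_square algebra_simps)
  also have "\<dots> = b^2 * ((Re w)^2 + (Im w)^2) + 2*a*b*Re w + a^2"
    using h by simp
  also have "\<dots> = (b * Re w + a)^2 + (b * Im w)^2"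
    by (simp add: power2_eq_square algebra_simps)
  also have "\<dots> = (cmod (of_real b * w + of_real a))^2"
    unfolding cmod_power2 by simp
  finally have "(cmod (of_real a * w + of_real b))^2 = (cmod (of_real b * w + of_real a))^2" .
  thus ?thesis by (simp add: power2_eq_iff_nonneg)
qed

lemma good_A:
  fixes a b :: rat assumes ab: "a^2 \<noteq> b^2" and w: "cmod w = 1"
  shows "\<exists>u. moebius (a,b,-b,-a) (Some w) = Some u \<and> cmod u = 1"
proof -
  define A where "A = real_of_rat a"
  define B where "B = real_of_rat b"
  have AB: "A^2 \<noteq> B^2" using ab unfolding A_def B_def
    by (metis of_rat_eq_iff of_rat_power)
  have den: "of_real B * w + of_real A \<noteq> 0"
  proof
    assume "of_real B * w + of_real A = 0"
    hence "of_real B * w = - of_real A" by (simp add: add_eq_0_iff)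
    hence "cmod (of_real B * w) = cmod (- of_real A)" by simp
    hence "\<bar>B\<bar> = \<bar>A\<bar>" using w by (simp add: norm_mult)
    hence "A^2 = B^2" by (metis power2_abs)
    thus False using AB by simp
  qed
  have m: "cmod (of_real A * w + of_real B) = cmod (of_real B * w + of_real A)"
    using cmod_swap[OF w] .
  have e1: "(of_rat (-b) :: complex) * w + of_rat (-a) = - (of_real B * w + of_real A)"
    by (simp add: ofrat_c A_def B_def of_rat_minus)
  have e2: "(of_rat a :: complex) * w + of_rat b = of_real A * w + of_real B"
    by (simp add: ofrat_c A_def B_def)
  have "cmod ((of_real A * w + of_real B) / (- (of_real B * w + of_real A))) = 1"
    using den m unfolding norm_divide norm_minus_cancel by simp
  moreover have "- (of_real B * w + of_real A) \<noteq> (0::complex)" using den by (metis neg_equal_0_iff_equal)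
  ultimately show ?thesis by (simp only: moebius.simps e1 e2 if_False) blast
qed

lemma circle_infinite: "infinite {w::complex. cmod w = 1}"
proof
  assume f: "finite {w::complex. cmod w = 1}"
  define g where "g = (\<lambda>x::real. Complex x (sqrt (1 - x^2)))"
  have "g ` {0..1} \<subseteq> {w. cmod w = 1}"
  proof
    fix w assume "w \<in> g ` {0..1}"
    then obtain x where x: "x \<in> {0..1}" "w = g x" by blast
    have "x^2 \<le> 1" using x by (simp add: power_le_one)
    thus "w \<in> {w. cmod w = 1}" using x by (simp add: g_def cmod_def)
  qed
  hence "finite (g ` {0..1})" using f finite_subset by blast
  moreover have "inj_on g {0..1}" unfolding inj_on_def g_def by simp
  ultimately have "finite {0..1::real}" using finite_imageD by blast
  thus False using infinite_Icc[of "0::real" 1] by simp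
qed

lemma goodN:
  fixes a b :: rat assumes ab: "a^2 \<noteq> b^2" and w: "cmod w = 1"
    and N: "N \<in> {(1, 0, 0, 1), (0, 1, 1, 0), (a, b, -b, -a), (b, a, -a, -b)}"
  shows "\<exists>u. moebius N (Some w) = Some u \<and> cmod u = 1"
proof -
  have w0: "w \<noteq> 0" using w by auto
  have ba: "b^2 \<noteq> a^2" using ab by simp
  show ?thesis using N good_A[OF ab w] good_A[OF ba w] w w0
    by (auto simp: norm_divide)
qed

lemma rev_dir:
  fixes a b :: rat
  assumes S: "pgl2_subgroup S" and ab: "a^2 \<noteq> b^2"
    and H: "\<forall>M\<in>S. \<exists>N\<in>{(1, 0, 0, 1), (0, 1, 1, 0), (a, b, -b, -a), (b, a, -a, -b)}. proj_eq M N"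
  shows "infinite (unit_orbits S)"
proof
  define F where "F = {(1::rat, 0::rat, 0::rat, 1::rat), (0, 1, 1, 0), (a, b, -b, -a), (b, a, -a, -b)}"
  assume fin: "finite (unit_orbits S)"
  have forb: "finite (orbit S z)" for z
  proof -
    have "orbit S z \<subseteq> (\<lambda>N. moebius N z) ` F"
      unfolding orbit_def using H proj_moebius unfolding F_def by fastforce
    moreover have "finite F" unfolding F_def by simp
    ultimately show ?thesis using finite_subset by blast
  qed
  have "finite (\<Union>(unit_orbits S))"
    using fin forb unfolding unit_orbits_def by auto
  moreover have "Some ` {w. cmod w = 1} \<subseteq> \<Union>(unit_orbits S)"
  proof
    fix z assume "z \<in> Some ` {w. cmod w = 1}"
    then obtain w where w: "cmod w = 1" "z = Some w" by blast
    have "\<forall>v\<in>orbit S z. v = Some 0 \<or> (\<exists>u. v = Some u \<and> cmod u = 1)"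
    proof
      fix v assume "v \<in> orbit S z"
      then obtain M where M: "M \<in> S" "v = moebius M z" unfolding orbit_def by blast
      then obtain N where N: "N \<in> F" "proj_eq M N" using H unfolding F_def by blast
      have "v = moebius N (Some w)" using M N w proj_moebius by simp
      thus "v = Some 0 \<or> (\<exists>u. v = Some u \<and> cmod u = 1)"
        using goodN[OF ab w(1), of N] N(1) unfolding F_def by blast
    qed
    hence "orbit S z \<in> unit_orbits S" unfolding unit_orbits_def by blast
    thus "z \<in> \<Union>(unit_orbits S)" using in_orbit[OF S, of z] by blast
  qed
  ultimately have "finite (Some ` {w::complex. cmod w = 1})" using finite_subset by blast
  hence "finite {w::complex. cmod w = 1}" using finite_imageD inj_Some by blast
  thus False using circle_infinite by blast
qed

lemma pow_inj:
  fixes r :: rat assumes "r \<noteq> 0" "\<bar>r\<bar> \<noteq> 1" "r^k = r^m"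
  shows "k = m"
proof (cases "\<bar>r\<bar> > 1")
  case True
  have "\<bar>r\<bar>^k = \<bar>r\<bar>^m" using assms(3) by (metis power_abs)
  thus ?thesis using True power_inject_exp by blast
next
  case False
  hence lt: "\<bar>r\<bar> < 1" using assms(2) by simp
  have gt: "1 < inverse \<bar>r\<bar>" using lt assms(1) by (simp add: one_less_inverse)
  have "(inverse \<bar>r\<bar>)^k = (inverse \<bar>r\<bar>)^m" using assms(3)
    by (metis power_abs power_inverse)
  thus ?thesis using gt power_inject_exp by blast
qed

lemma finite_order:
  assumes S: "pgl2_subgroup S" and fin: "finite (S // proj_rel)"
    and M: "(p, q, q, p) \<in> S" and pq: "p^2 \<noteq> q^2"
  shows "p = 0 \<or> q = 0"
proof (rule ccontr)
  assume nz: "\<not> (p = 0 \<or> q = 0)"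
  define u where "u = p + q"
  define v where "v = p - q"
  have u0: "u \<noteq> 0" and v0: "v \<noteq> 0" using pq unfolding u_def v_def
    by (auto simp: eq_neg_iff_add_eq_0[symmetric])
  define pw where "pw k = ((u^k + v^k)/2, (u^k - v^k)/2, (u^k - v^k)/2, (u^k + v^k)/2)" for k
  have pwS: "pw k \<in> S" for k
  proof (induct k)
    case 0 thus ?case using id_in[OF S] by (simp add: pw_def)
  next
    case (Suc k)
    have "mmul2 (p, q, q, p) (pw k) = pw (Suc k)"
      unfolding pw_def u_def v_def by (simp add: field_simps)
    moreover have "mmul2 (p, q, q, p) (pw k) \<in> S" using S M Suc unfolding pgl2_subgroup_def by blast
    ultimately show ?case by simp
  qed
  define r where "r = u / v"
  have r0: "r \<noteq> 0" using u0 v0 by (simp add: r_def)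
  have r1: "\<bar>r\<bar> \<noteq> 1"
  proof
    assume "\<bar>r\<bar> = 1"
    hence "u = v \<or> u = - v" using v0 unfolding r_def by (auto simp: abs_if field_simps split: if_splits)
    thus False using nz unfolding u_def v_def by auto
  qed
  have inj: "k = m" if "proj_rel `` {pw k} = proj_rel `` {pw m}" for k m
  proof -
    have "(pw m, pw m) \<in> proj_rel" unfolding proj_rel_def proj_eq_def
      by (cases "pw m") (auto intro!: exI[of _ 1])
    hence "(pw k, pw m) \<in> proj_rel" using that by blast
    then obtain t where t: "pw k = smul2 t (pw m)" unfolding proj_rel_def proj_eq_def by blast
    hence "u^k = t * u^m" "v^k = t * v^m" unfolding pw_def by (auto simp: field_simps)
    moreover have "t \<noteq> 0" using calculation u0 by auto
    ultimately have "r^k = r^m" unfolding r_def using u0 v0 by (simp add: power_divide field_simps)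
    thus ?thesis using pow_inj r0 r1 by blast
  qed
  have "(\<lambda>k. proj_rel `` {pw k}) ` UNIV \<subseteq> S // proj_rel"
    using pwS unfolding quotient_def by blast
  moreover have "infinite ((\<lambda>k. proj_rel `` {pw k}) ` (UNIV :: nat set))"
    using inj by (meson finite_imageD infinite_UNIV_nat inj_onI)
  ultimately show False using fin finite_subset by blast
qed

lemma shape_rat:
  fixes a b c d :: rat
  assumes det: "a*d - b*c \<noteq> 0" and e1: "a^2 + b^2 = c^2 + d^2" and e2: "a*b = c*d"
  shows "(c = b \<and> d = a) \<or> (c = -b \<and> d = -a)"
proof -
  have "(a+b)^2 = (c+d)^2" "(a-b)^2 = (c-d)^2" using e1 e2 by (simp_all add: power2_eq_square algebra_simps)
  hence s1: "a+b = c+d \<or> a+b = -(c+d)" and s2: "a-b = c-d \<or> a-b = -(c-d)"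
    by (simp_all add: power2_eq_iff)
  show ?thesis
  proof (cases "a+b = c+d")
    case True
    show ?thesis
    proof (cases "a-b = c-d")
      case True2: True
      hence "c = a" "d = b" using True by linarith+
      thus ?thesis using det by (simp add: mult.commute)
    next
      case False
      hence "a - b = -(c-d)" using s2 by simp
      hence "c = b" "d = a" using True by linarith+
      thus ?thesis by simp
    qed
  next
    case False
    hence F: "a+b = -(c+d)" using s1 by simp
    show ?thesis
    proof (cases "a-b = c-d")
      case True
      hence "c = -b" "d = -a" using F by linarith+
      thus ?thesis by simp
    next
      case False
      hence "a - b = -(c-d)" using s2 by simp
      hence "c = -a" "d = -b" using F by linarith+
      thus ?thesis using det by (simp add: mult.commute)
    qed
  qed
qed

lemma lin_zero:
  fixes al be x1 x2 :: real
  assumes "al + be * x1 = 0" "al + be * x2 = 0" "x1 \<noteq> x2"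
  shows "al = 0 \<and> be = 0"
proof -
  have "be * x1 = be * x2" using assms(1,2) by linarith
  hence "be = 0" using assms(3) by simp
  thus ?thesis using assms by simp
qed

lemma shape:
  fixes a b c d :: rat
  assumes det: "a*d - b*c \<noteq> 0" and Z: "infinite Z"
   and Zu: "\<forall>w\<in>Z. cmod w = 1"
   and Zg: "\<forall>w\<in>Z. moebius (a,b,c,d) (Some w) = Some 0 \<or> (\<exists>u. moebius (a,b,c,d) (Some w) = Some u \<and> cmod u = 1)"
  shows "(c = b \<and> d = a) \<or> (c = -b \<and> d = -a)"
proof -
  define A where "A = real_of_rat a"
  define B where "B = real_of_rat b"
  define C where "C = real_of_rat c"
  define D where "D = real_of_rat d"
  define K where "K = {w::complex. of_rat a * w + of_rat b = 0}"
  have finK: "finite K"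
  proof (cases "a = 0")
    case True
    hence "b \<noteq> 0" using det by auto
    hence "K = {}" using True unfolding K_def by simp
    thus ?thesis by simp
  next
    case False
    have "K \<subseteq> {- of_rat b / of_rat a}"
    proof
      fix w assume "w \<in> K"
      hence "of_rat a * w = - (of_rat b :: complex)" unfolding K_def by (simp add: eq_neg_iff_add_eq_0)
      moreover have "(of_rat a :: complex) \<noteq> 0" using False by simp
      ultimately have "w = - of_rat b / of_rat a" by (metis nonzero_mult_div_cancel_left)
      thus "w \<in> {- of_rat b / of_rat a}" by simp
    qed
    thus ?thesis using finite_subset by blast
  qed
  define Z' where "Z' = Z - K"
  have Z': "infinite Z'" unfolding Z'_def using Z finK by simp
  have eq: "(A^2 + B^2 - C^2 - D^2) + (2*(A*B - C*D)) * Re w = 0" if w: "w \<in> Z'" for w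
  proof -
    have wu: "cmod w = 1" using w Zu unfolding Z'_def by blast
    have n0: "of_rat a * w + of_rat b \<noteq> 0" using w unfolding Z'_def K_def by blast
    have g: "moebius (a,b,c,d) (Some w) = Some 0 \<or> (\<exists>u. moebius (a,b,c,d) (Some w) = Some u \<and> cmod u = 1)"
      using w Zg unfolding Z'_def by blast
    have d0: "of_rat c * w + of_rat d \<noteq> 0"
    proof
      assume "of_rat c * w + of_rat d = 0"
      hence "moebius (a,b,c,d) (Some w) = None" by simp
      thus False using g by auto
    qed
    have m: "moebius (a,b,c,d) (Some w) = Some ((of_rat a * w + of_rat b) / (of_rat c * w + of_rat d))"
      using d0 by (simp only: moebius.simps if_False)
    have "(of_rat a * w + of_rat b) / (of_rat c * w + of_rat d) \<noteq> 0" using n0 d0 by simp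
    hence "cmod ((of_rat a * w + of_rat b) / (of_rat c * w + of_rat d)) = 1"
      using g unfolding m by blast
    hence "cmod (of_rat a * w + of_rat b) = cmod (of_rat c * w + of_rat d)"
      using d0 by (simp add: norm_divide)
    hence "(cmod (of_rat a * w + of_rat b))^2 = (cmod (of_rat c * w + of_rat d))^2" by simp
    hence "(A * Re w + B)^2 + (A * Im w)^2 = (C * Re w + D)^2 + (C * Im w)^2"
      unfolding cmod_power2 by (simp add: ofrat_c A_def B_def C_def D_def)
    moreover have hI: "(Re w)^2 + (Im w)^2 = 1" using wu cmod_power2[of w] by simp
    have gen: "(X * Re w + Y)^2 + (X * Im w)^2 = X^2 + 2*X*Y*Re w + Y^2" for X Y
    proof -
      have "(X * Re w + Y)^2 + (X * Im w)^2 = X^2 * ((Re w)^2 + (Im w)^2) + 2*X*Y*Re w + Y^2"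
        by (simp add: power2_eq_square algebra_simps)
      thus ?thesis using hI by simp
    qed
    ultimately show ?thesis unfolding gen by (simp add: algebra_simps)
  qed
  have "Z' \<noteq> {}" using Z' by (metis finite.emptyI)
  then obtain w1 where w1: "w1 \<in> Z'" by blast
  have "{w. cmod w = 1 \<and> Re w = Re w1} \<subseteq> {w1, cnj w1}"
  proof
    fix w assume h: "w \<in> {w. cmod w = 1 \<and> Re w = Re w1}"
    have "cmod w1 = 1" using w1 Zu unfolding Z'_def by blast
    hence "(Im w)^2 = (Im w1)^2" using h cmod_power2[of w] cmod_power2[of w1] by simp
    hence "Im w = Im w1 \<or> Im w = - Im w1" by (simp add: power2_eq_iff)
    thus "w \<in> {w1, cnj w1}" using h by (auto simp: complex_eq_iff)
  qed
  hence "finite {w. cmod w = 1 \<and> Re w = Re w1}" using finite_subset by blast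
  hence "infinite (Z' - {w. cmod w = 1 \<and> Re w = Re w1})" using Z' by simp
  hence "Z' - {w. cmod w = 1 \<and> Re w = Re w1} \<noteq> {}" by (metis finite.emptyI)
  then obtain w2 where w2: "w2 \<in> Z'" "w2 \<notin> {w. cmod w = 1 \<and> Re w = Re w1}"
    by blast
  have "cmod w2 = 1" using w2(1) Zu unfolding Z'_def by blast
  hence "Re w2 \<noteq> Re w1" using w2(2) by simp
  hence "A^2 + B^2 - C^2 - D^2 = 0 \<and> 2*(A*B - C*D) = 0"
    using lin_zero[OF eq[OF w1] eq[OF w2(1)]] by simp
  hence "real_of_rat (a^2 + b^2) = real_of_rat (c^2 + d^2)" "real_of_rat (a*b) = real_of_rat (c*d)"
    unfolding A_def B_def C_def D_def by (simp_all add: of_rat_add of_rat_mult of_rat_power)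
  hence "a^2 + b^2 = c^2 + d^2" "a*b = c*d" by (simp_all only: of_rat_eq_iff)
  thus ?thesis using shape_rat det by blast
qed

lemma par_lemma:
  fixes a0 b0 p q :: rat
  assumes ab: "a0^2 \<noteq> b0^2" and pq: "p^2 \<noteq> q^2" and Q: "a0 * q - b0 * p = 0"
  shows "proj_eq (p, q, -q, -p) (a0, b0, -b0, -a0)"
proof -
  have s0: "a0^2 + b0^2 \<noteq> 0" using ab by (auto simp: add_nonneg_eq_0_iff)
  define t where "t = (a0 * p + b0 * q) / (a0^2 + b0^2)"
  have e1: "p = t * a0"
  proof -
    have "p * (a0^2 + b0^2) = a0 * (a0 * p + b0 * q)"
      using Q by (simp add: power2_eq_square algebra_simps)
    thus ?thesis using s0 unfolding t_def by (simp add: field_simps)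
  qed
  have e2: "q = t * b0"
  proof -
    have "q * (a0^2 + b0^2) = b0 * (a0 * p + b0 * q)"
      using Q by (simp add: power2_eq_square algebra_simps)
    thus ?thesis using s0 unfolding t_def by (simp add: field_simps)
  qed
  have t0: "t \<noteq> 0" using e1 e2 pq by auto
  show ?thesis unfolding proj_eq_def using t0 e1 e2 by (intro exI[of _ t]) simp
qed

lemma fwd:
  assumes fS: "finite_pgl2_subgroup S" and inf: "infinite (unit_orbits S)"
  shows "\<exists>a b :: rat. a\<^sup>2 \<noteq> b\<^sup>2 \<and>
       (\<forall>M\<in>S. \<exists>N\<in>{(1, 0, 0, 1), (0, 1, 1, 0), (a, b, -b, -a), (b, a, -a, -b)}.
          proj_eq M N)"
proof -
  have S: "pgl2_subgroup S" and fin: "finite (S // proj_rel)"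
    using fS unfolding finite_pgl2_subgroup_def by auto
  define ok where "ok v \<longleftrightarrow> v = Some 0 \<or> (\<exists>u. v = Some u \<and> cmod u = 1)" for v :: sphere
  define Z where "Z = {w. cmod w = 1 \<and> (\<forall>M\<in>S. ok (moebius M (Some w)))}"
  have "unit_orbits S \<subseteq> (\<lambda>w. orbit S (Some w)) ` (insert 0 Z)"
  proof
    fix Ob assume "Ob \<in> unit_orbits S"
    then obtain z where O: "Ob = orbit S z" "\<forall>v\<in>Ob. ok v"
      unfolding unit_orbits_def ok_def by blast
    have "z \<in> Ob" using in_orbit[OF S] O(1) by simp
    hence "ok z" using O(2) by blast
    then obtain w where w: "z = Some w" "w = 0 \<or> cmod w = 1" unfolding ok_def by blast
    have "\<forall>M\<in>S. ok (moebius M (Some w))" using O w(1) unfolding orbit_def by blast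
    hence "w \<in> insert 0 Z" using w(2) unfolding Z_def by blast
    thus "Ob \<in> (\<lambda>w. orbit S (Some w)) ` (insert 0 Z)" using O(1) w(1) by blast
  qed
  hence Zinf: "infinite Z" using inf finite_subset by (metis finite_imageI finite_insert)
  have form: "\<exists>p q. p^2 \<noteq> q^2 \<and> (M = (p,q,q,p) \<or> M = (p,q,-q,-p))" if M: "M \<in> S" for M
  proof -
    obtain a b c d where Md: "M = (a,b,c,d)" by (cases M) auto
    have det: "a*d - b*c \<noteq> 0" using S M unfolding pgl2_subgroup_def Md by auto
    have Zu: "\<forall>w\<in>Z. cmod w = 1" unfolding Z_def by blast
    have Zg: "\<forall>w\<in>Z. moebius (a,b,c,d) (Some w) = Some 0 \<or> (\<exists>u. moebius (a,b,c,d) (Some w) = Some u \<and> cmod u = 1)"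
      using M unfolding Z_def ok_def Md by blast
    have "(c = b \<and> d = a) \<or> (c = -b \<and> d = -a)" using shape[OF det Zinf Zu Zg] .
    moreover have "a^2 \<noteq> b^2" using det calculation by (auto simp: power2_eq_square)
    ultimately show ?thesis using Md by blast
  qed
  have plus: "proj_eq M (1,0,0,1) \<or> proj_eq M (0,1,1,0)" if "M \<in> S" "M = (p,q,q,p)" "p^2 \<noteq> q^2" for M p q
  proof -
    have "p = 0 \<or> q = 0" using finite_order[OF S fin] that by blast
    thus ?thesis
    proof
      assume p: "p = 0"
      hence "q \<noteq> 0" using that by auto
      thus ?thesis unfolding proj_eq_def using that p by (intro disjI2 exI[of _ q]) simp
    next
      assume q: "q = 0"
      hence "p \<noteq> 0" using that by auto
      thus ?thesis unfolding proj_eq_def using that q by (intro disjI1 exI[of _ p]) simp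
    qed
  qed
  show ?thesis
  proof (cases "\<exists>a0 b0. (a0, b0, -b0, -a0) \<in> S \<and> a0^2 \<noteq> b0^2")
    case True
    then obtain a0 b0 where M0: "(a0, b0, -b0, -a0) \<in> S" and ab: "a0^2 \<noteq> b0^2" by blast
    have "\<forall>M\<in>S. \<exists>N\<in>{(1, 0, 0, 1), (0, 1, 1, 0), (a0, b0, -b0, -a0), (b0, a0, -a0, -b0)}. proj_eq M N"
    proof
      fix M assume M: "M \<in> S"
      obtain p q where pq: "p^2 \<noteq> q^2" and Mf: "M = (p,q,q,p) \<or> M = (p,q,-q,-p)"
        using form[OF M] by blast
      show "\<exists>N\<in>{(1, 0, 0, 1), (0, 1, 1, 0), (a0, b0, -b0, -a0), (b0, a0, -a0, -b0)}. proj_eq M N"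
        using Mf
      proof
        assume "M = (p,q,q,p)"
        thus ?thesis using plus[OF M _ pq] by blast
      next
        assume Me: "M = (p,q,-q,-p)"
        define P where "P = a0 * p - b0 * q"
        define Q where "Q = a0 * q - b0 * p"
        have "mmul2 (a0, b0, -b0, -a0) M = (P, Q, Q, P)"
          unfolding Me P_def Q_def by (simp add: algebra_simps)
        moreover have "mmul2 (a0, b0, -b0, -a0) M \<in> S" using S M0 M unfolding pgl2_subgroup_def by blast
        ultimately have PS: "(P,Q,Q,P) \<in> S" by simp
        hence "det2 (P,Q,Q,P) \<noteq> 0" using S unfolding pgl2_subgroup_def by blast
        hence PQ: "P^2 \<noteq> Q^2" by (simp add: power2_eq_square)
        have "P = 0 \<or> Q = 0" using finite_order[OF S fin PS PQ] .
        thus ?thesis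
        proof
          assume "Q = 0"
          hence "proj_eq M (a0, b0, -b0, -a0)" using par_lemma[OF ab pq] Me unfolding Q_def by simp
          thus ?thesis by blast
        next
          assume "P = 0"
          hence "b0 * q - a0 * p = 0" unfolding P_def by simp
          moreover have "b0^2 \<noteq> a0^2" using ab by simp
          ultimately have "proj_eq M (b0, a0, -a0, -b0)" using par_lemma[of b0 a0 p q] pq Me by simp
          thus ?thesis by blast
        qed
      qed
    qed
    thus ?thesis using ab by blast
  next
    case False
    have "\<forall>M\<in>S. \<exists>N\<in>{(1, 0, 0, 1), (0, 1, 1, 0), (1, 0, -0, -1), (0, 1, -1, -0::rat)}. proj_eq M N"
    proof
      fix M assume M: "M \<in> S"
      obtain p q where pq: "p^2 \<noteq> q^2" and Mf: "M = (p,q,q,p) \<or> M = (p,q,-q,-p)"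
        using form[OF M] by blast
      have "M = (p,q,q,p)" using Mf False M pq by blast
      thus "\<exists>N\<in>{(1, 0, 0, 1), (0, 1, 1, 0), (1, 0, -0, -1), (0, 1, -1, -0::rat)}. proj_eq M N"
        using plus[OF M _ pq] by blast
    qed
    thus ?thesis by (intro exI[of _ 1] exI[of _ 0]) simp
  qed
qed

theorem mainTheorem4:
  assumes "finite_pgl2_subgroup S"
  shows "infinite (unit_orbits S) \<longleftrightarrow>
    (\<exists>a b :: rat. a\<^sup>2 \<noteq> b\<^sup>2 \<and>
       (\<forall>M\<in>S. \<exists>N\<in>{(1, 0, 0, 1), (0, 1, 1, 0), (a, b, -b, -a), (b, a, -a, -b)}.
          proj_eq M N))"
proof
  assume "infinite (unit_orbits S)"
  thus "\<exists>a b :: rat. a\<^sup>2 \<noteq> b\<^sup>2 \<and>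
       (\<forall>M\<in>S. \<exists>N\<in>{(1, 0, 0, 1), (0, 1, 1, 0), (a, b, -b, -a), (b, a, -a, -b)}.
          proj_eq M N)" using fwd[OF assms] by blast
next
  assume "\<exists>a b :: rat. a\<^sup>2 \<noteq> b\<^sup>2 \<and>
       (\<forall>M\<in>S. \<exists>N\<in>{(1, 0, 0, 1), (0, 1, 1, 0), (a, b, -b, -a), (b, a, -a, -b)}.
          proj_eq M N)"
  then obtain a b :: rat where "a\<^sup>2 \<noteq> b\<^sup>2" "\<forall>M\<in>S. \<exists>N\<in>{(1, 0, 0, 1), (0, 1, 1, 0), (a, b, -b, -a), (b, a, -a, -b)}.
          proj_eq M N" by blast
  moreover have "pgl2_subgroup S" using assms unfolding finite_pgl2_subgroup_def by blast
  ultimately show "infinite (unit_orbits S)" using rev_dir by blast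
qed

end
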